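(* Let $S$ be an inverse monoid and $(X,E(S),p)$ a (global) presheaf of geodesic metric spaces on which $S$ acts properly and coboundedly, and fix $x_1\in X_1$. For $R\ge0$ let $d^R$ be the path metric on $S$ of the simplicial graph $S^R$ with vertex set $S$ in which distinct $s,t$ are adjacent iff $d(x_1\cdot s,x_1\cdot t)\le R$ (edges of length $1$; $d^R(s,t)=\infty$ if no path exists). Then there exists $T\ge0$ such that for every $R\ge T$ the extended metric space $(S,d^R)$ is quasi-isometric to $(X,d)$.
   Context: An inverse monoid is a monoid $S$ (identity $1$) in which every $s$ has a unique $s^{-1}$ with $ss^{-1}s=s$, $s^{-1}ss^{-1}=s^{-1}$; $E(S)$ is its set of idempotents, a meet-semilattice with meet $ef$. Presheaf: a set $X$ with maps $p\colon X\to E(S)$ and $X\times E(S)\to X$ such that $(x\cdot e)\cdot f=x\cdot ef$, $x\cdot p(x)=x$, $p(x\cdot e)=p(x)e$; fibers $X_e=p^{-1}(e)$. A (global) presheaf of metric spaces additionally has $p$ surjective, each $X_e$ a metric space $d_e$, and $d_e(x,y)\ge d_{ef}(x\cdot f,y\cdot f)$ for $x,y\in X_e$; $d(x,y)=d_e(x,y)$ for $x,y\in X_e$ and $\infty$ across fibers. Geodesic: finite distances $D$ are realised by isometric embeddings of $[0,D]$. Action: a right action $X\times S\to X$ extending the presheaf map on $E(S)$, with $p(x\cdot s)=s^{-1}p(x)s$ and $d_e(x,y)\ge d_{s^{-1}es}(x\cdot s,y\cdot s)$ for $x,y\in X_e$. Proper: for every $y_1\in X_1$ and $R\ge0$ there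 is a finite $\mathcal C\subseteq S$ with $\{s: d(y_1\cdot s,y_1\cdot s^{-1}s)\le R\}\subseteq\{ce: c\in\mathcal C,e\in E(S)\}$. Cobounded: there are $x_1'\in X_1$, $T_0\ge0$ such that every point of $X$ equals $y\cdot s$ for some $s\in S$ and $y$ with $d(x_1',y)\le T_0$. A map $f$ between extended metric spaces $(A,d_A),(B,d_B)$ is a quasi-isometry if there are $L\ge1$, $C\ge0$ with $d_A(a,a')<\infty$ iff $d_B(f(a),f(a'))<\infty$, $\frac1L d_A(a,a')-C\le d_B(f(a),f(a'))\le Ld_A(a,a')+C$ when finite, and every point of $B$ within distance $C$ of $f(A)$; spaces are quasi-isometric if such a map exists. *)

theory Defs
  imports Complex_Main "HOL-Library.Extended_Real"
begin

text \<open>The inverse monoid S is the whole type 's (a monoid via the class monoid_mult: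
  multiplication and identity 1).\<close>

definition inverse_monoid :: "'s::monoid_mult itself \<Rightarrow> bool" where
  "inverse_monoid _ \<longleftrightarrow> (\<forall>s::'s. \<exists>!t. s * t * s = s \<and> t * s * t = t)"

definition minv :: "'s::monoid_mult \<Rightarrow> 's" where
  "minv s = (THE t. s * t * s = s \<and> t * s * t = t)"

definition idem :: "'s::monoid_mult set" where
  "idem = {e. e * e = e}"

text \<open>X is the whole type 'x, p the projection, rs the map X x E(S) -> X,
  d the distance on fibres (its values across fibres are irrelevant).\<close>

definition presheaf :: "('x \<Rightarrow> 's::monoid_mult) \<Rightarrow> ('x \<Rightarrow> 's \<Rightarrow> 'x) \<Rightarrow> bool" where
  "presheaf p rs \<longleftrightarrow>
     (\<forall>x. p x \<in> idem) \<and>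
     (\<forall>x. \<forall>e\<in>idem. \<forall>f\<in>idem. rs (rs x e) f = rs x (e * f)) \<and>
     (\<forall>x. rs x (p x) = x) \<and>
     (\<forall>x. \<forall>e\<in>idem. p (rs x e) = p x * e)"

definition edist :: "('x \<Rightarrow> 's) \<Rightarrow> ('x \<Rightarrow> 'x \<Rightarrow> real) \<Rightarrow> 'x \<Rightarrow> 'x \<Rightarrow> ereal" where
  "edist p d x y = (if p x = p y then ereal (d x y) else \<infinity>)"

definition global_presheaf_metric ::
  "('x \<Rightarrow> 's::monoid_mult) \<Rightarrow> ('x \<Rightarrow> 's \<Rightarrow> 'x) \<Rightarrow> ('x \<Rightarrow> 'x \<Rightarrow> real) \<Rightarrow> bool" where
  "global_presheaf_metric p rs d \<longleftrightarrow>
     presheaf p rs \<and> range p = idem \<and>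
     (\<forall>x y. p x = p y \<longrightarrow> d x y = 0 \<longleftrightarrow> x = y) \<and>
     (\<forall>x y. p x = p y \<longrightarrow> d x y = d y x) \<and>
     (\<forall>x y z. p x = p y \<longrightarrow> p y = p z \<longrightarrow> d x z \<le> d x y + d y z) \<and>
     (\<forall>x y. \<forall>f\<in>idem. p x = p y \<longrightarrow> d (rs x f) (rs y f) \<le> d x y)"

definition geodesic_fibres :: "('x \<Rightarrow> 's) \<Rightarrow> ('x \<Rightarrow> 'x \<Rightarrow> real) \<Rightarrow> bool" where
  "geodesic_fibres p d \<longleftrightarrow>
     (\<forall>x y. p x = p y \<longrightarrow>
        (\<exists>\<gamma>::real \<Rightarrow> 'x. \<gamma> 0 = x \<and> \<gamma> (d x y) = y \<and>
           (\<forall>t\<in>{0..d x y}. p (\<gamma> t) = p x) \<and>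
           (\<forall>s\<in>{0..d x y}. \<forall>t\<in>{0..d x y}. d (\<gamma> s) (\<gamma> t) = \<bar>s - t\<bar>)))"

definition is_action ::
  "('x \<Rightarrow> 's::monoid_mult) \<Rightarrow> ('x \<Rightarrow> 's \<Rightarrow> 'x) \<Rightarrow> ('x \<Rightarrow> 'x \<Rightarrow> real) \<Rightarrow> ('x \<Rightarrow> 's \<Rightarrow> 'x) \<Rightarrow> bool" where
  "is_action p rs d act \<longleftrightarrow>
     (\<forall>x s t. act (act x s) t = act x (s * t)) \<and>
     (\<forall>x. \<forall>e\<in>idem. act x e = rs x e) \<and>
     (\<forall>x s. p (act x s) = minv s * p x * s) \<and>
     (\<forall>x y s. p x = p y \<longrightarrow> d (act x s) (act y s) \<le> d x y)"

definition proper_action ::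
  "('x \<Rightarrow> 's::monoid_mult) \<Rightarrow> ('x \<Rightarrow> 'x \<Rightarrow> real) \<Rightarrow> ('x \<Rightarrow> 's \<Rightarrow> 'x) \<Rightarrow> bool" where
  "proper_action p d act \<longleftrightarrow>
     (\<forall>y1 R. p y1 = 1 \<longrightarrow> R \<ge> 0 \<longrightarrow>
        (\<exists>C. finite C \<and>
           {s. edist p d (act y1 s) (act y1 (minv s * s)) \<le> ereal R}
             \<subseteq> {c * e | c e. c \<in> C \<and> e \<in> idem}))"

definition cobounded_action ::
  "('x \<Rightarrow> 's::monoid_mult) \<Rightarrow> ('x \<Rightarrow> 'x \<Rightarrow> real) \<Rightarrow> ('x \<Rightarrow> 's \<Rightarrow> 'x) \<Rightarrow> bool" where
  "cobounded_action p d act \<longleftrightarrow>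
     (\<exists>x1' T0. p x1' = 1 \<and> T0 \<ge> 0 \<and>
        (\<forall>z. \<exists>s y. edist p d x1' y \<le> ereal T0 \<and> z = act y s))"

definition SR_adj :: "('x \<Rightarrow> 's) \<Rightarrow> ('x \<Rightarrow> 'x \<Rightarrow> real) \<Rightarrow> ('x \<Rightarrow> 's \<Rightarrow> 'x) \<Rightarrow> 'x \<Rightarrow> real
    \<Rightarrow> 's \<Rightarrow> 's \<Rightarrow> bool" where
  "SR_adj p d act x1 R s t \<longleftrightarrow> s \<noteq> t \<and> edist p d (act x1 s) (act x1 t) \<le> ereal R"

definition SR_walk :: "('x \<Rightarrow> 's) \<Rightarrow> ('x \<Rightarrow> 'x \<Rightarrow> real) \<Rightarrow> ('x \<Rightarrow> 's \<Rightarrow> 'x) \<Rightarrow> 'x \<Rightarrow> real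
    \<Rightarrow> 's \<Rightarrow> 's \<Rightarrow> nat \<Rightarrow> bool" where
  "SR_walk p d act x1 R s t n \<longleftrightarrow>
     (\<exists>w::nat \<Rightarrow> 's. w 0 = s \<and> w n = t \<and> (\<forall>i<n. SR_adj p d act x1 R (w i) (w (Suc i))))"

definition SR_dist :: "('x \<Rightarrow> 's) \<Rightarrow> ('x \<Rightarrow> 'x \<Rightarrow> real) \<Rightarrow> ('x \<Rightarrow> 's \<Rightarrow> 'x) \<Rightarrow> 'x \<Rightarrow> real
    \<Rightarrow> 's \<Rightarrow> 's \<Rightarrow> ereal" where
  "SR_dist p d act x1 R s t =
     (if \<exists>n. SR_walk p d act x1 R s t n
      then ereal (real (LEAST n. SR_walk p d act x1 R s t n)) else \<infinity>)"

definition quasi_isometry :: "('a \<Rightarrow> 'a \<Rightarrow> ereal) \<Rightarrow> ('b \<Rightarrow> 'b \<Rightarrow> ereal) \<Rightarrow> ('a \<Rightarrow> 'b) \<Rightarrow> bool" where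
  "quasi_isometry dA dB f \<longleftrightarrow>
     (\<exists>L C::real. L \<ge> 1 \<and> C \<ge> 0 \<and>
       (\<forall>a a'. dA a a' < \<infinity> \<longleftrightarrow> dB (f a) (f a') < \<infinity>) \<and>
       (\<forall>a a'. dA a a' < \<infinity> \<longrightarrow>
          real_of_ereal (dA a a') / L - C \<le> real_of_ereal (dB (f a) (f a')) \<and>
          real_of_ereal (dB (f a) (f a')) \<le> L * real_of_ereal (dA a a') + C) \<and>
       (\<forall>b. \<exists>a. dB b (f a) \<le> ereal C))"

definition quasi_isometric :: "('a \<Rightarrow> 'a \<Rightarrow> ereal) \<Rightarrow> ('b \<Rightarrow> 'b \<Rightarrow> ereal) \<Rightarrow> bool" where
  "quasi_isometric dA dB \<longleftrightarrow> (\<exists>f. quasi_isometry dA dB f)"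

end

theory Submission
  imports Defs
begin

lemma lazy_walk:
  assumes "\<And>i. i < n \<Longrightarrow> edist p d (act x1 (w i)) (act x1 (w (Suc i))) \<le> ereal R"
  shows "\<exists>m\<le>n. SR_walk p d act x1 R (w 0) (w n) m"
  using assms
proof (induction n arbitrary: w)
  case 0
  then show ?case unfolding SR_walk_def by (intro exI[of _ 0]) auto
next
  case (Suc n)
  let ?v = "\<lambda>i. w (Suc i)"
  have "\<exists>m\<le>n. SR_walk p d act x1 R (?v 0) (?v n) m" using Suc.prems by (intro Suc.IH) auto
  then obtain m u where m: "m \<le> n" "u 0 = w 1" "u m = w (Suc n)"
      "\<forall>i<m. SR_adj p d act x1 R (u i) (u (Suc i))"
    unfolding SR_walk_def by auto
  show ?case
  proof (cases "w 0 = w 1")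
    case True
    then have "SR_walk p d act x1 R (w 0) (w (Suc n)) m"
      using m unfolding SR_walk_def by (intro exI[of _ u]) auto
    then show ?thesis using m by (intro exI[of _ m]) auto
  next
    case False
    define u' where "u' = (\<lambda>i. if i = 0 then w 0 else u (i - 1))"
    have "SR_walk p d act x1 R (w 0) (w (Suc n)) (Suc m)"
      unfolding SR_walk_def
    proof (intro exI[of _ u'] conjI allI impI)
      show "u' 0 = w 0" by (simp add: u'_def)
      show "u' (Suc m) = w (Suc n)" using m by (simp add: u'_def)
      fix i assume i: "i < Suc m"
      show "SR_adj p d act x1 R (u' i) (u' (Suc i))"
      proof (cases i)
        case 0
        then show ?thesis using False Suc.prems[of 0] m by (simp add: u'_def SR_adj_def)
      next
        case (Suc j)
        then show ?thesis using m i by (simp add: u'_def)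
      qed
    qed
    then show ?thesis using m by (intro exI[of _ "Suc m"]) auto
  qed
qed

lemma walk_bound:
  assumes tri: "\<And>x y z. p x = p y \<Longrightarrow> p y = p z \<Longrightarrow> d x z \<le> d x y + d y z"
    and d0: "\<And>x. d x x = 0"
    and "\<forall>i<n. SR_adj p d act x1 R (w i) (w (Suc i))"
  shows "p (act x1 (w 0)) = p (act x1 (w n)) \<and> d (act x1 (w 0)) (act x1 (w n)) \<le> R * real n"
  using assms(3)
proof (induction n)
  case 0 then show ?case using d0 by simp
next
  case (Suc n)
  have IH: "p (act x1 (w 0)) = p (act x1 (w n)) \<and> d (act x1 (w 0)) (act x1 (w n)) \<le> R * real n"
    using Suc by auto
  have st: "p (act x1 (w n)) = p (act x1 (w (Suc n))) \<and> d (act x1 (w n)) (act x1 (w (Suc n))) \<le> R"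
    using Suc.prems unfolding SR_adj_def edist_def by (auto split: if_splits)
  show ?case using IH st tri[of "act x1 (w 0)" "act x1 (w n)" "act x1 (w (Suc n))"]
    by (auto simp: algebra_simps)
qed

theorem lemma3p9:
  fixes p :: "'x \<Rightarrow> 's::monoid_mult"
    and rs act :: "'x \<Rightarrow> 's \<Rightarrow> 'x"
    and d :: "'x \<Rightarrow> 'x \<Rightarrow> real"
    and x1 :: 'x
  assumes "inverse_monoid TYPE('s)"
    and "global_presheaf_metric p rs d"
    and "geodesic_fibres p d"
    and "is_action p rs d act"
    and "proper_action p d act"
    and "cobounded_action p d act"
    and "p x1 = 1"
  shows "\<exists>T\<ge>0. \<forall>R\<ge>T. quasi_isometric (SR_dist p d act x1 R) (edist p d)"
proof -
  from assms(2) have d0': "\<And>x y. p x = p y \<Longrightarrow> d x y = 0 \<longleftrightarrow> x = y"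
    and sym: "\<And>x y. p x = p y \<Longrightarrow> d x y = d y x"
    and tri: "\<And>x y z. p x = p y \<Longrightarrow> p y = p z \<Longrightarrow> d x z \<le> d x y + d y z"
    unfolding global_presheaf_metric_def by blast+
  have d0: "d x x = 0" for x using d0' by simp
  have dnn: "d x y \<ge> 0" if "p x = p y" for x y
  proof -
    have "d x x \<le> d x y + d y x" using tri[of x y x, OF that that[symmetric]] .
    then show ?thesis using d0[of x] sym[OF that] by linarith
  qed
  from assms(4) have pact: "\<And>x s. p (act x s) = minv s * p x * s"
    and contr: "\<And>x y s. p x = p y \<Longrightarrow> d (act x s) (act y s) \<le> d x y"
    unfolding is_action_def by blast+
  from assms(6) obtain x1' T0 where x1': "p x1' = 1" "T0 \<ge> 0"
    and cob: "\<And>z. \<exists>s y. edist p d x1' y \<le> ereal T0 \<and> z = act y s"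
    unfolding cobounded_action_def by blast
  define K where "K = d x1 x1' + T0"
  have K0: "K \<ge> 0" using dnn[of x1 x1'] x1' assms(7) by (simp add: K_def)
  have near: "\<exists>s. p (act x1 s) = p z \<and> d (act x1 s) z \<le> K" for z
  proof -
    obtain s y where y: "edist p d x1' y \<le> ereal T0" "z = act y s" using cob by blast
    have py: "p x1' = p y" "d x1' y \<le> T0" using y(1) by (auto simp: edist_def split: if_splits)
    have "p (act x1 s) = p z" using pact y(2) py x1' assms(7) by simp
    moreover have "d (act x1 s) z \<le> d x1 y" using contr[of x1 y s] py x1' assms(7) y(2) by simp
    moreover have "d x1 y \<le> d x1 x1' + d x1' y" using tri[of x1 x1' y] py x1' assms(7) by simp
    ultimately show ?thesis using py unfolding K_def by (intro exI[of _ s]) auto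
  qed
  have "\<exists>c. \<forall>z. p (act x1 (c z)) = p z \<and> d (act x1 (c z)) z \<le> K"
    using near by (intro choice) blast
  then obtain c where c: "\<And>z. p (act x1 (c z)) = p z \<and> d (act x1 (c z)) z \<le> K"
    by blast
  define T where "T = 2 * K + 1"
  have "T \<ge> 0" using K0 by (simp add: T_def)
  moreover have "quasi_isometric (SR_dist p d act x1 R) (edist p d)" if R: "R \<ge> T" for R
  proof -
    have R0: "R \<ge> 0" using R K0 T_def by simp
    have walk_ex: "\<exists>m. real m \<le> d (act x1 s) (act x1 t) + 2 \<and> SR_walk p d act x1 R s t m"
      if st: "p (act x1 s) = p (act x1 t)" for s t
    proof -
      let ?D = "d (act x1 s) (act x1 t)"
      obtain \<gamma> where g: "\<gamma> 0 = act x1 s" "\<gamma> ?D = act x1 t"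
        "\<forall>u\<in>{0..?D}. p (\<gamma> u) = p (act x1 s)"
        "\<forall>a\<in>{0..?D}. \<forall>b\<in>{0..?D}. d (\<gamma> a) (\<gamma> b) = \<bar>a - b\<bar>"
        using assms(3) st unfolding geodesic_fibres_def by blast
      have D0: "?D \<ge> 0" using dnn st by blast
      define N where "N = nat (ceiling ?D) + 1"
      have N1: "N \<ge> 1" unfolding N_def by simp
      have ND: "real N \<le> ?D + 2" unfolding N_def using D0 ceiling_correct[of ?D] by linarith
      have DN: "?D \<le> real N" unfolding N_def using le_of_int_ceiling[of ?D] by linarith
      define g' where "g' = (\<lambda>i::nat. \<gamma> (min (real i) ?D))"
      define w where "w = (\<lambda>i. if i = 0 then s else if i = N then t else c (g' i))"
      have gp: "p (g' i) = p (act x1 s)" for i using g(3) D0 by (simp add: g'_def)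
      have gd: "d (g' i) (g' (Suc i)) \<le> 1" for i
      proof -
        have "d (g' i) (g' (Suc i)) = \<bar>min (real i) ?D - min (real (Suc i)) ?D\<bar>"
          unfolding g'_def using g(4) D0 by simp
        also have "\<dots> \<le> 1" by linarith
        finally show ?thesis .
      qed
      have gw: "p (act x1 (w i)) = p (g' i) \<and> d (act x1 (w i)) (g' i) \<le> K" if "i \<le> N" for i
      proof (cases "i = 0")
        case True
        then show ?thesis using g(1) d0 K0 D0 by (simp add: w_def g'_def)
      next
        case False
        show ?thesis
        proof (cases "i = N")
          case True
          then have "g' i = act x1 t" using g(2) DN by (simp add: g'_def min_def)
          then show ?thesis using True False d0 K0 by (simp add: w_def)
        next
          case F2: False
          then show ?thesis using False c by (simp add: w_def)
        qed
      qed
      have step: "edist p d (act x1 (w i)) (act x1 (w (Suc i))) \<le> ereal R" if i: "i < N" for i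
      proof -
        have a: "p (act x1 (w i)) = p (act x1 s)" "p (act x1 (w (Suc i))) = p (act x1 s)"
          using gw[of i] gw[of "Suc i"] gp i by auto
        have t1: "d (act x1 (w i)) (act x1 (w (Suc i))) \<le> d (act x1 (w i)) (g' i) + d (g' i) (act x1 (w (Suc i)))"
          using tri[of "act x1 (w i)" "g' i" "act x1 (w (Suc i))"] a gp[of i] by simp
        have t2: "d (g' i) (act x1 (w (Suc i))) \<le> d (g' i) (g' (Suc i)) + d (g' (Suc i)) (act x1 (w (Suc i)))"
          using tri[of "g' i" "g' (Suc i)" "act x1 (w (Suc i))"] a gp[of i] gp[of "Suc i"] by simp
        have t3: "d (g' (Suc i)) (act x1 (w (Suc i))) = d (act x1 (w (Suc i))) (g' (Suc i))"
          using sym[of "g' (Suc i)" "act x1 (w (Suc i))"] a gp[of "Suc i"] by simp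
        have "d (act x1 (w i)) (act x1 (w (Suc i))) \<le> K + 1 + K"
          using t1 t2 t3 gw[of i] gw[of "Suc i"] gd[of i] i by linarith
        then show ?thesis using a R by (simp add: edist_def T_def)
      qed
      obtain m where m: "m \<le> N" "SR_walk p d act x1 R (w 0) (w N) m"
        using lazy_walk[of N p d act x1 w R] step by blast
      have "w 0 = s" "w N = t" using N1 by (auto simp: w_def)
      then show ?thesis using m ND by (intro exI[of _ m]) auto
    qed
    have wb: "p (act x1 s) = p (act x1 t) \<and> d (act x1 s) (act x1 t) \<le> R * real n"
      if wk: "SR_walk p d act x1 R s t n" for s t n
    proof -
      obtain w where w: "w 0 = s" "w n = t" "\<forall>i<n. SR_adj p d act x1 R (w i) (w (Suc i))"
        using wk unfolding SR_walk_def by blast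
      have "p (act x1 (w 0)) = p (act x1 (w n)) \<and> d (act x1 (w 0)) (act x1 (w n)) \<le> R * real n"
        by (rule walk_bound[where p=p and d=d and act=act, OF tri d0 w(3)])
      then show ?thesis unfolding w(1) w(2) .
    qed
    have fin: "SR_dist p d act x1 R s t < \<infinity> \<longleftrightarrow> p (act x1 s) = p (act x1 t)" for s t
    proof
      assume "SR_dist p d act x1 R s t < \<infinity>"
      then have "\<exists>n. SR_walk p d act x1 R s t n" unfolding SR_dist_def by (cases "\<exists>n. SR_walk p d act x1 R s t n") simp_all
      then obtain n where "SR_walk p d act x1 R s t n" by blast
      from wb[OF this] show "p (act x1 s) = p (act x1 t)" by (rule conjunct1)
    next
      assume "p (act x1 s) = p (act x1 t)"
      then obtain m where "SR_walk p d act x1 R s t m" using walk_ex by blast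
      then have "\<exists>n. SR_walk p d act x1 R s t n" by blast
      then show "SR_dist p d act x1 R s t < \<infinity>" unfolding SR_dist_def by simp
    qed
    have bounds: "real_of_ereal (SR_dist p d act x1 R a a') / (R + 1) - max 2 K
          \<le> real_of_ereal (edist p d (act x1 a) (act x1 a')) \<and>
        real_of_ereal (edist p d (act x1 a) (act x1 a'))
          \<le> (R + 1) * real_of_ereal (SR_dist p d act x1 R a a') + max 2 K"
      if fa: "SR_dist p d act x1 R a a' < \<infinity>" for a a'
    proof -
      have st: "p (act x1 a) = p (act x1 a')" using fa fin by blast
      let ?D = "d (act x1 a) (act x1 a')"
      define n0 where "n0 = (LEAST n. SR_walk p d act x1 R a a' n)"
      obtain m where m: "real m \<le> ?D + 2" "SR_walk p d act x1 R a a' m" using walk_ex st by blast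
      have ex: "\<exists>n. SR_walk p d act x1 R a a' n" using m by blast
      have SRd: "SR_dist p d act x1 R a a' = ereal (real n0)" using ex by (simp add: SR_dist_def n0_def)
      have wn0: "SR_walk p d act x1 R a a' n0" using LeastI_ex[OF ex] n0_def by simp
      have "n0 \<le> m" unfolding n0_def using m(2) by (rule Least_le)
      then have n0D: "real n0 \<le> ?D + 2" using m(1) by linarith
      have Dn: "?D \<le> R * real n0" using wb[OF wn0] by simp
      have ed: "edist p d (act x1 a) (act x1 a') = ereal ?D" using st by (simp add: edist_def)
      have "real n0 / (R + 1) \<le> real n0" using R0
        by (simp add: divide_le_eq) (simp add: algebra_simps mult_nonneg_nonneg)
      moreover have "R * real n0 \<le> (R + 1) * real n0" by (simp add: algebra_simps)
      moreover have "max 2 K \<ge> 2" by simp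
      ultimately show ?thesis unfolding SRd ed real_of_ereal.simps using n0D Dn
        by (smt (verit))
    qed
    have surj: "\<exists>a. edist p d b (act x1 a) \<le> ereal (max 2 K)" for b
    proof -
      obtain s where s: "p (act x1 s) = p b" "d (act x1 s) b \<le> K" using near by blast
      then have "d b (act x1 s) \<le> K" using sym[of "act x1 s" b] s(1) by simp
      then have dle: "d b (act x1 s) \<le> max 2 K" by linarith
      have e: "edist p d b (act x1 s) = ereal (d b (act x1 s))" using s(1) by (simp add: edist_def)
      have "edist p d b (act x1 s) \<le> ereal (max 2 K)" unfolding e using dle by (simp only: ereal_less_eq(3))
      then show ?thesis by blast
    qed
    have "quasi_isometry (SR_dist p d act x1 R) (edist p d) (act x1)"
      unfolding quasi_isometry_def
      apply (rule exI[of _ "R + 1"], rule exI[of _ "max 2 K"])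
    proof (intro conjI allI impI)
      show "1 \<le> R + 1" using R0 by simp
      show "0 \<le> max 2 K" by simp
      fix a a'
      show "SR_dist p d act x1 R a a' < \<infinity> \<longleftrightarrow> edist p d (act x1 a) (act x1 a') < \<infinity>"
        using fin[of a a'] by (simp add: edist_def)
    next
      fix a a' assume "SR_dist p d act x1 R a a' < \<infinity>"
      then show "real_of_ereal (SR_dist p d act x1 R a a') / (R + 1) - max 2 K
          \<le> real_of_ereal (edist p d (act x1 a) (act x1 a'))" using bounds by blast
    next
      fix a a' assume "SR_dist p d act x1 R a a' < \<infinity>"
      then show "real_of_ereal (edist p d (act x1 a) (act x1 a'))
          \<le> (R + 1) * real_of_ereal (SR_dist p d act x1 R a a') + max 2 K" using bounds by blast
    next
      fix b show "\<exists>a. edist p d b (act x1 a) \<le> ereal (max 2 K)" using surj by blast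
    qed
    then show ?thesis unfolding quasi_isometric_def by blast
  qed
  ultimately show ?thesis by blast
qed

end
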